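(* In the Poisson matching problem $PM(\lambda,\mu)$ (defined in the context), for every blue point $b\in\mathcal{B}$, $$\mathcal{P}(b)=\{r\in\mathcal{R}:g(b,r)=0\}.$$ Moreover, for any $b_1,b_2\in\mathcal{B}$, $\mathcal{P}(b_1)\cap\mathcal{P}(b_2)\ne\emptyset$ implies $\mathcal{P}(b_1)=\mathcal{P}(b_2)$ and $g(b_1,b_2)=1$.
   Context: Poisson matching problem $PM(\lambda,\mu)$, $0<\lambda\le\mu$: $\mathcal{B}$ (blue points) and $\mathcal{R}$ (red points) are independent homogeneous Poisson point processes on $\mathbb{R}$ of intensities $\lambda$ and $\mu$ respectively; $\mathcal{S}=\mathcal{B}\cup\mathcal{R}$. A matching is a map $\mathcal{M}:\mathcal{S}\to\mathcal{S}\cup\{\infty\}$ with $\mathcal{M}(r)\in\mathcal{B}\cup\{\infty\}$ for red $r$, $\mathcal{M}(b)\in\mathcal{R}\cup\{\infty\}$ for blue $b$, and $\mathcal{M}(r)=b$ iff $\mathcal{M}(b)=r$. The matching segment $I_\mathcal{M}(x)$ is the open interval with endpoints $x$ and $\mathcal{M}(x)$ ($(x,\infty)$ if unmatched). $\mathcal{M}$ is nested if for all $x,y\in\mathcal{S}$, $x\in I_\mathcal{M}(y)$ implies $\mathcal{M}(x)$ lies in the closure of $I_\mathcal{M}(y)$. For $b\in\mathcal{B}$, $\mathcal{P}(b)=\{r\in\mathcal{R}:\exists\text{ nested }\mathcal{M}\text{ with }\mathcal{M}(b)=r\}$. For $x<y$, $g(x,y)$ is the number of red points in the open interval $(x,y)$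 minus the number of blue points in $(x,y)$; for $x>y$, $g(x,y)=g(y,x)$. *)

theory Defs
  imports "HOL-Analysis.Analysis" "HOL-Library.Extended_Real"
begin

text \<open>A matching is a map M :: real => ereal; the value PInfty (\<infinity>) means "unmatched".
  Only the values of M on B \<union> R are relevant.\<close>

definition is_matching :: "real set \<Rightarrow> real set \<Rightarrow> (real \<Rightarrow> ereal) \<Rightarrow> bool" where
  "is_matching B R M \<longleftrightarrow>
     (\<forall>r\<in>R. M r \<in> ereal ` B \<union> {\<infinity>}) \<and>
     (\<forall>b\<in>B. M b \<in> ereal ` R \<union> {\<infinity>}) \<and>
     (\<forall>r\<in>R. \<forall>b\<in>B. M r = ereal b \<longleftrightarrow> M b = ereal r)"

definition seg :: "(real \<Rightarrow> ereal) \<Rightarrow> real \<Rightarrow> ereal set" where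
  "seg M x = {min (ereal x) (M x) <..< max (ereal x) (M x)}"

text \<open>Nested matching; closure is taken in the extended reals, so the closure of (x,\<infinity>) contains \<infinity>.\<close>
definition nested :: "real set \<Rightarrow> real set \<Rightarrow> (real \<Rightarrow> ereal) \<Rightarrow> bool" where
  "nested B R M \<longleftrightarrow>
     (\<forall>x\<in>B \<union> R. \<forall>y\<in>B \<union> R. ereal x \<in> seg M y \<longrightarrow> M x \<in> closure (seg M y))"

definition Pset :: "real set \<Rightarrow> real set \<Rightarrow> real \<Rightarrow> real set" where
  "Pset B R b = {r\<in>R. \<exists>M. is_matching B R M \<and> nested B R M \<and> M b = ereal r}"

definition gfun :: "real set \<Rightarrow> real set \<Rightarrow> real \<Rightarrow> real \<Rightarrow> int" where
  "gfun B R x y = int (card (R \<inter> {min x y<..<max x y})) - int (card (B \<inter> {min x y<..<max x y}))"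

end

theory Submission
  imports Defs
begin


lemma nc_matching:
  fixes B R :: "real set"
  assumes disj: "B \<inter> R = {}"
  shows "finite S \<Longrightarrow> S \<subseteq> B \<union> R \<Longrightarrow> card (S \<inter> R) = card (S \<inter> B) \<Longrightarrow>
    \<exists>m. (\<forall>x\<in>S. m x \<in> S \<and> m (m x) = x \<and> (x \<in> R \<longrightarrow> m x \<in> B) \<and> (x \<in> B \<longrightarrow> m x \<in> R)) \<and>
        (\<forall>x\<in>S. \<forall>y\<in>S. min y (m y) < x \<and> x < max y (m y) \<longrightarrow> min y (m y) \<le> m x \<and> m x \<le> max y (m y))"
proof (induction "card S" arbitrary: S rule: less_induct)
  case less
  show ?case
  proof (cases "S = {}")
    case True then show ?thesis by auto
  next
    case False
    have fR: "finite (S \<inter> R)" "finite (S \<inter> B)" using less.prems by auto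
    have "S \<inter> R \<noteq> {} \<or> S \<inter> B \<noteq> {}" using False less.prems(2) by blast
    hence ne: "S \<inter> R \<noteq> {}" "S \<inter> B \<noteq> {}" using less.prems(3) fR by (metis card_0_eq)+
    define P where "P = (S \<inter> R) \<times> (S \<inter> B)"
    have fP: "finite P" "P \<noteq> {}" using fR ne by (auto simp: P_def)
    define d where "d = Min ((\<lambda>p. \<bar>fst p - snd p\<bar>) ` P)"
    have "d \<in> (\<lambda>p. \<bar>fst p - snd p\<bar>) ` P" unfolding d_def using fP by (intro Min_in) auto
    then obtain u v where uv: "(u,v) \<in> P" "\<bar>u - v\<bar> = d" by auto
    have dmin: "\<And>p. p \<in> P \<Longrightarrow> d \<le> \<bar>fst p - snd p\<bar>" unfolding d_def using fP by auto
    have u: "u \<in> S" "u \<in> R" "u \<notin> B" and v: "v \<in> S" "v \<in> B" "v \<notin> R" using uv disj by (auto simp: P_def)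
    have gap: "\<not> (min u v < w \<and> w < max u v)" if "w \<in> S" for w
    proof
      assume w: "min u v < w \<and> w < max u v"
      have "w \<in> R \<or> w \<in> B" using that less.prems(2) by auto
      then show False
      proof
        assume "w \<in> R" hence "(w,v) \<in> P" using that v by (auto simp: P_def)
        from dmin[OF this] uv w show False by (auto simp: min_def max_def split: if_splits)
      next
        assume "w \<in> B" hence "(u,w) \<in> P" using that u by (auto simp: P_def)
        from dmin[OF this] uv w show False by (auto simp: min_def max_def split: if_splits)
      qed
    qed
    define S' where "S' = S - {u,v}"
    have uv_ne: "u \<noteq> v" using u v by auto
    have cS: "card S' < card S" unfolding S'_def using u v less.prems(1) uv_ne
      by (metis Diff_insert2 card_Diff2_less)
    have c1: "S' \<inter> R = (S \<inter> R) - {u}" "S' \<inter> B = (S \<inter> B) - {v}" using u v by (auto simp: S'_def)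
    have "card (S' \<inter> R) = card (S' \<inter> B)" unfolding c1 using u v fR less.prems(3) by simp
    moreover have "finite S'" "S' \<subseteq> B \<union> R" using less.prems by (auto simp: S'_def)
    ultimately obtain m' where m':
      "\<forall>x\<in>S'. m' x \<in> S' \<and> m' (m' x) = x \<and> (x \<in> R \<longrightarrow> m' x \<in> B) \<and> (x \<in> B \<longrightarrow> m' x \<in> R)"
      "\<forall>x\<in>S'. \<forall>y\<in>S'. min y (m' y) < x \<and> x < max y (m' y) \<longrightarrow> min y (m' y) \<le> m' x \<and> m' x \<le> max y (m' y)"
      using less.hyps[OF cS] by blast
    define m where "m x = (if x = u then v else if x = v then u else m' x)" for x
    have A: "\<forall>x\<in>S. m x \<in> S \<and> m (m x) = x \<and> (x \<in> R \<longrightarrow> m x \<in> B) \<and> (x \<in> B \<longrightarrow> m x \<in> R)"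
      using m'(1) u v uv_ne unfolding m_def S'_def by auto
    have B: "min y (m y) \<le> m x \<and> m x \<le> max y (m y)"
      if xy: "x \<in> S" "y \<in> S" "min y (m y) < x" "x < max y (m y)" for x y
    proof -
      consider "y = u" | "y = v" | "y \<in> S'" using xy S'_def by blast
      then show ?thesis
      proof cases
        case 1 then show ?thesis using gap[OF xy(1)] xy by (auto simp: m_def)
      next
        case 2 then show ?thesis using gap[OF xy(1)] xy uv_ne by (auto simp: m_def min_def max_def split: if_splits)
      next
        case 3
        have my: "m y = m' y" "m' y \<in> S'" "m' y \<in> S" using 3 m'(1) by (auto simp: m_def S'_def)
        have gy: "\<not> (min u v < y \<and> y < max u v)" "\<not> (min u v < m' y \<and> m' y < max u v)"
          using gap 3 my by (auto simp: S'_def)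
        have y3: "y \<noteq> u" "y \<noteq> v" "m' y \<noteq> u" "m' y \<noteq> v" using 3 my by (auto simp: S'_def)
        consider "x = u" | "x = v" | "x \<in> S'" using xy S'_def by blast
        then show ?thesis
        proof cases
          case 1 then show ?thesis using xy my gy y3 by (auto simp: m_def min_def max_def split: if_splits)
        next
          case 2 then show ?thesis using xy my gy y3 uv_ne by (auto simp: m_def min_def max_def split: if_splits)
        next
          case x3: 3
          have "m x = m' x" using x3 by (auto simp: m_def S'_def)
          then show ?thesis using m'(2) x3 3 xy my by auto
        qed
      qed
    qed
    show ?thesis using A B by blast
  qed
qed



lemma card_split3:
  fixes S :: "real set"
  assumes "x < y" "y < z" "finite (S \<inter> {x..z})"
  shows "int (card (S \<inter> {x<..<z})) = int (card (S \<inter> {x<..<y})) + (if y \<in> S then 1 else 0) + int (card (S \<inter> {y<..<z}))"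
proof -
  have f1: "finite (S \<inter> {x<..<y})" "finite (S \<inter> {y<..<z})"
    by (rule finite_subset[OF _ assms(3)], use assms in auto)+
  have eq: "S \<inter> {x<..<z} = (S \<inter> {x<..<y}) \<union> ((S \<inter> {y}) \<union> (S \<inter> {y<..<z}))" using assms by auto
  have "card (S \<inter> {x<..<z}) = card (S \<inter> {x<..<y}) + card ((S \<inter> {y}) \<union> (S \<inter> {y<..<z}))"
    unfolding eq by (rule card_Un_disjoint) (use f1 in auto)
  also have "card ((S \<inter> {y}) \<union> (S \<inter> {y<..<z})) = card (S \<inter> {y}) + card (S \<inter> {y<..<z})"
    by (rule card_Un_disjoint) (use f1 in auto)
  also have "card (S \<inter> {y}) = (if y \<in> S then 1 else 0)" by auto
  finally show ?thesis by simp
qed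

lemma gfun_sym: "gfun B R x y = gfun B R y x"
  unfolding gfun_def by (simp add: min.commute max.commute)

lemma gfun_add3:
  assumes "x < y" "y < z" "\<And>a c. finite (B \<inter> {a..c})" "\<And>a c. finite (R \<inter> {a..c})"
  shows "gfun B R x z = gfun B R x y + (if y \<in> R then 1 else 0) - (if y \<in> B then 1 else 0) + gfun B R y z"
  using card_split3[of x y z R] card_split3[of x y z B] assms
  unfolding gfun_def by (simp add: min_def max_def)

lemma part2_aux:
  assumes disj: "B \<inter> R = {}" and lfB: "\<And>a c. finite (B \<inter> {a..c})" and lfR: "\<And>a c. finite (R \<inter> {a..c})"
    and b: "b1 \<in> B" "b2 \<in> B" "b1 < b2" and r: "r \<in> R" "gfun B R b1 r = 0" "gfun B R b2 r = 0"
  shows "gfun B R b1 b2 = 1 \<and> (\<forall>r'\<in>R. gfun B R b1 r' = 0 \<longleftrightarrow> gfun B R b2 r' = 0)"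
proof -
  have bR: "b1 \<notin> R" "b2 \<notin> R" using b disj by auto
  have g12: "gfun B R b1 b2 = 1"
  proof -
    have nb: "r \<notin> B" "r \<noteq> b1" "r \<noteq> b2" using r disj b by auto
    consider "r < b1" | "b1 < r \<and> r < b2" | "b2 < r" using nb by linarith
    then show ?thesis
    proof cases
      case 1
      show ?thesis using gfun_add3[OF 1 b(3), of B R] lfB lfR b bR disj nb r gfun_sym[of B R r] gfun_sym[of B R r b2] by auto
    next
      case 2
      show ?thesis using gfun_add3[of b1 r b2 B R] 2 lfB lfR b bR disj nb r gfun_sym[of B R r b2] by auto
    next
      case 3
      show ?thesis using gfun_add3[OF b(3) 3, of B R] lfB lfR b bR disj nb r by auto
    qed
  qed
  have key: "gfun B R b1 r' = gfun B R b2 r' \<or> gfun B R b1 r' + gfun B R b2 r' = 0"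
    if "r' \<in> R" for r'
  proof -
    have nb: "r' \<notin> B" "r' \<noteq> b1" "r' \<noteq> b2" using that disj b using g12 by auto
    consider "r' < b1" | "b1 < r' \<and> r' < b2" | "b2 < r'" using nb by linarith
    then show ?thesis
    proof cases
      case 1
      show ?thesis using gfun_add3[OF 1 b(3), of B R] lfB lfR b bR disj nb gfun_sym[of B R r'] gfun_sym[of B R r' b2] using g12 by auto
    next
      case 2
      show ?thesis using gfun_add3[of b1 r' b2 B R] 2 lfB lfR b bR disj nb that gfun_sym[of B R r' b2] using g12 by auto
    next
      case 3
      show ?thesis using gfun_add3[OF b(3) 3, of B R] lfB lfR b bR disj nb using g12 by auto
    qed
  qed
  show ?thesis using g12 key by fastforce
qed



lemma seg_fin: "M y = ereal z \<Longrightarrow> seg M y = {ereal (min y z)<..<ereal (max y z)}"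
  by (auto simp: seg_def min_def max_def)

lemma seg_inf: "M y = \<infinity> \<Longrightarrow> seg M y = {ereal y<..<\<infinity>}"
  by (auto simp: seg_def)

lemma closure_seg_fin: "M y = ereal z \<Longrightarrow> y \<noteq> z \<Longrightarrow> closure (seg M y) = {ereal (min y z)..ereal (max y z)}"
  by (subst seg_fin, assumption, rule closure_greaterThanLessThan) (auto simp: min_def max_def)

lemma closure_seg_inf: "M y = \<infinity> \<Longrightarrow> closure (seg M y) = {ereal y..\<infinity>}"
  by (subst seg_inf, assumption, rule closure_greaterThanLessThan) auto

lemma P_sub:
  assumes disj: "B \<inter> R = {}" and lfB: "\<And>a c. finite (B \<inter> {a..c})" and lfR: "\<And>a c. finite (R \<inter> {a..c})"
    and b: "b \<in> B" and r: "r \<in> R" and M: "is_matching B R M" "nested B R M" "M b = ereal r"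
  shows "gfun B R b r = 0"
proof -
  define lo where "lo = min b r"
  define hi where "hi = max b r"
  have brne: "b \<noteq> r" using b r disj by auto
  have lohi: "lo < hi" using brne by (auto simp: lo_def hi_def)
  have Mr: "M r = ereal b" using M(1) M(3) b r unfolding is_matching_def by auto
  have cl: "closure (seg M b) = {ereal lo..ereal hi}" using closure_seg_fin[of M b r, OF M(3) brne] by (simp add: lo_def hi_def)
  have inseg: "ereal x \<in> seg M b" if "lo < x" "x < hi" for x
    using that seg_fin[of M b r, OF M(3)] by (auto simp: lo_def hi_def min_def max_def)
  have nest: "M x \<in> {ereal lo..ereal hi}" if "x \<in> B \<union> R" "lo < x" "x < hi" for x
    using M(2) that inseg[OF that(2,3)] b cl unfolding nested_def by blast
  have ir: "\<exists>c. M x = ereal c \<and> c \<in> B \<and> lo < c \<and> c < hi \<and> M c = ereal x" if "x \<in> R" "lo < x" "x < hi" for x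
  proof -
    have "M x \<in> ereal ` B \<union> {\<infinity>}" using M(1) that unfolding is_matching_def by auto
    moreover have "M x \<in> {ereal lo..ereal hi}" using nest that by auto
    ultimately obtain c where c: "M x = ereal c" "c \<in> B" "lo \<le> c" "c \<le> hi" by auto
    have Mc: "M c = ereal x" using M(1) c that unfolding is_matching_def by auto
    have "c \<noteq> b" using Mc M(3) that by (auto simp: lo_def hi_def)
    moreover have "c \<noteq> r" using c r disj by auto
    ultimately show ?thesis using c Mc by (auto simp: lo_def hi_def)
  qed
  have ib: "\<exists>c. M x = ereal c \<and> c \<in> R \<and> lo < c \<and> c < hi \<and> M c = ereal x" if "x \<in> B" "lo < x" "x < hi" for x
  proof -
    have "M x \<in> ereal ` R \<union> {\<infinity>}" using M(1) that unfolding is_matching_def by auto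
    moreover have "M x \<in> {ereal lo..ereal hi}" using nest that by auto
    ultimately obtain c where c: "M x = ereal c" "c \<in> R" "lo \<le> c" "c \<le> hi" by auto
    have Mc: "M c = ereal x" using M(1) c that unfolding is_matching_def by auto
    have "c \<noteq> r" using Mc Mr that by (auto simp: lo_def hi_def)
    moreover have "c \<noteq> b" using c b disj by auto
    ultimately show ?thesis using c Mc by (auto simp: lo_def hi_def)
  qed
  define f where "f x = real_of_ereal (M x)" for x
  have fin: "finite (R \<inter> {lo<..<hi})" "finite (B \<inter> {lo<..<hi})"
    by (rule finite_subset[OF _ lfR[of lo hi]], force) (rule finite_subset[OF _ lfB[of lo hi]], force)
  have "card (R \<inter> {lo<..<hi}) \<le> card (B \<inter> {lo<..<hi})"
  proof (rule card_inj_on_le[of f])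
    show "inj_on f (R \<inter> {lo<..<hi})"
    proof
      fix x y assume xy: "x \<in> R \<inter> {lo<..<hi}" "y \<in> R \<inter> {lo<..<hi}" "f x = f y"
      obtain c where c: "M x = ereal c" "M c = ereal x" using ir xy(1) by force
      obtain d where d: "M y = ereal d" "M d = ereal y" using ir xy(2) by force
      show "x = y" using c d xy(3) by (simp add: f_def)
    qed
    show "f ` (R \<inter> {lo<..<hi}) \<subseteq> B \<inter> {lo<..<hi}" using ir by (force simp: f_def)
  qed (use fin in auto)
  moreover have "card (B \<inter> {lo<..<hi}) \<le> card (R \<inter> {lo<..<hi})"
  proof (rule card_inj_on_le[of f])
    show "inj_on f (B \<inter> {lo<..<hi})"
    proof
      fix x y assume xy: "x \<in> B \<inter> {lo<..<hi}" "y \<in> B \<inter> {lo<..<hi}" "f x = f y"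
      obtain c where c: "M x = ereal c" "M c = ereal x" using ib xy(1) by force
      obtain d where d: "M y = ereal d" "M d = ereal y" using ib xy(2) by force
      show "x = y" using c d xy(3) by (simp add: f_def)
    qed
    show "f ` (B \<inter> {lo<..<hi}) \<subseteq> R \<inter> {lo<..<hi}" using ib by (force simp: f_def)
  qed (use fin in auto)
  ultimately show ?thesis unfolding gfun_def lo_def hi_def by simp
qed



lemma P_sup:
  assumes disj: "B \<inter> R = {}" and lfB: "\<And>a c. finite (B \<inter> {a..c})" and lfR: "\<And>a c. finite (R \<inter> {a..c})"
    and b: "b \<in> B" and r: "r \<in> R" and g: "gfun B R b r = 0"
  shows "r \<in> Pset B R b"
proof -
  define lo where "lo = min b r"
  define hi where "hi = max b r"
  have brne: "b \<noteq> r" using b r disj by auto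
  have lohi: "lo < hi" using brne by (auto simp: lo_def hi_def)
  define S where "S = (B \<union> R) \<inter> {lo<..<hi}"
  have finS: "finite S" unfolding S_def
    by (rule finite_subset[of _ "(B \<inter> {lo..hi}) \<union> (R \<inter> {lo..hi})"]) (use lfB lfR in auto)
  have SR: "S \<inter> R = R \<inter> {lo<..<hi}" and SB: "S \<inter> B = B \<inter> {lo<..<hi}" unfolding S_def by auto
  have "card (S \<inter> R) = card (S \<inter> B)" using g unfolding SR SB gfun_def lo_def hi_def by simp
  then obtain m where m1: "\<forall>x\<in>S. m x \<in> S \<and> m (m x) = x \<and> (x \<in> R \<longrightarrow> m x \<in> B) \<and> (x \<in> B \<longrightarrow> m x \<in> R)"
    and m2: "\<forall>x\<in>S. \<forall>y\<in>S. min y (m y) < x \<and> x < max y (m y) \<longrightarrow> min y (m y) \<le> m x \<and> m x \<le> max y (m y)"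
    using nc_matching[OF disj finS] unfolding S_def by blast
  have mne: "m x \<noteq> x" if "x \<in> S" for x using m1 that disj unfolding S_def by auto
  have bS: "b \<notin> S" "r \<notin> S" unfolding S_def lo_def hi_def by auto
  define M where "M x = (if x = b then ereal r else if x = r then ereal b else if x \<in> S then ereal (m x) else \<infinity>)" for x
  have Mb: "M b = ereal r" by (simp add: M_def)
  have mat: "is_matching B R M"
    unfolding is_matching_def
  proof (intro conjI ballI)
    fix x assume "x \<in> R" then show "M x \<in> ereal ` B \<union> {\<infinity>}" using m1 b brne disj by (auto simp: M_def)
  next
    fix x assume "x \<in> B" then show "M x \<in> ereal ` R \<union> {\<infinity>}" using m1 r brne disj by (auto simp: M_def)
  next
    fix x y assume xy: "x \<in> R" "y \<in> B"
    show "M x = ereal y \<longleftrightarrow> M y = ereal x"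
      using xy m1 bS brne disj b r by (auto simp: M_def)
  qed
  have nes: "nested B R M" unfolding nested_def
  proof (intro ballI impI)
    fix x y assume x: "x \<in> B \<union> R" and y: "y \<in> B \<union> R" and xs: "ereal x \<in> seg M y"
    show "M x \<in> closure (seg M y)"
    proof (cases "y = b \<or> y = r")
      case True
      have My: "M y = ereal (if y = b then r else b)" using True by (auto simp: M_def)
      have ne: "y \<noteq> (if y = b then r else b)" using brne by auto
      have mm: "min y (if y = b then r else b) = lo" "max y (if y = b then r else b) = hi"
        using True by (auto simp: lo_def hi_def)
      have xin: "lo < x" "x < hi" using xs seg_fin[of M y, OF My] mm by auto
      hence xS: "x \<in> S" "x \<noteq> b" "x \<noteq> r" using x unfolding S_def lo_def hi_def by auto
      have "M x = ereal (m x)" "m x \<in> S" using xS m1 by (auto simp: M_def)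
      then show ?thesis using closure_seg_fin[of M y, OF My ne] mm unfolding S_def by auto
    next
      case False
      show ?thesis
      proof (cases "y \<in> S")
        case True
        have My: "M y = ereal (m y)" using True False by (auto simp: M_def)
        have ne: "y \<noteq> m y" using mne[OF True] by metis
        have myS: "m y \<in> S" using m1 True by auto
        have xin: "min y (m y) < x" "x < max y (m y)" using xs seg_fin[of M y, OF My] by (auto simp: min_def max_def split: if_splits)
        hence xS: "x \<in> S" using x True myS unfolding S_def by (auto simp: min_def max_def split: if_splits)
        have Mx: "M x = ereal (m x)" using xS bS by (auto simp: M_def)
        have "min y (m y) \<le> m x \<and> m x \<le> max y (m y)" using m2 xS True xin by blast
        then show ?thesis using closure_seg_fin[of M y, OF My ne] Mx by (auto simp: min_def max_def split: if_splits)
      next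
        case ny: False
        have My: "M y = \<infinity>" using ny False by (auto simp: M_def)
        have xy: "y < x" using xs seg_inf[of M y, OF My] by auto
        have yout: "\<not> (lo \<le> y \<and> y \<le> hi)" using y ny False unfolding S_def lo_def hi_def by auto
        show ?thesis
        proof (cases "x = b \<or> x = r \<or> x \<in> S")
          case True
          have xin: "lo \<le> x" "x \<le> hi" using True unfolding S_def lo_def hi_def by auto
          have "\<exists>z. M x = ereal z \<and> lo \<le> z" using True m1 unfolding M_def S_def lo_def hi_def by auto
          then obtain z where z: "M x = ereal z" "lo \<le> z" by blast
          have "y \<le> z" using yout xin xy z by linarith
          then show ?thesis using closure_seg_inf[of M y, OF My] z by auto
        next
          case False
          then have "M x = \<infinity>" by (auto simp: M_def)
          then show ?thesis using closure_seg_inf[of M y, OF My] by auto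
        qed
      qed
    qed
  qed
  show ?thesis unfolding Pset_def using mat nes Mb r by blast
qed


theorem lemmaA5:
  fixes B R :: "real set"
  assumes disj: "B \<inter> R = {}"
    and locfinB: "\<And>a c. finite (B \<inter> {a..c})"
    and locfinR: "\<And>a c. finite (R \<inter> {a..c})"
  shows "(\<forall>b\<in>B. Pset B R b = {r\<in>R. gfun B R b r = 0}) \<and>
         (\<forall>b1\<in>B. \<forall>b2\<in>B. b1 \<noteq> b2 \<and> Pset B R b1 \<inter> Pset B R b2 \<noteq> {} \<longrightarrow>
             Pset B R b1 = Pset B R b2 \<and> gfun B R b1 b2 = 1)"
proof -
  have P1: "Pset B R b = {r\<in>R. gfun B R b r = 0}" if b: "b \<in> B" for b
  proof
    show "Pset B R b \<subseteq> {r\<in>R. gfun B R b r = 0}"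
      using P_sub[OF disj locfinB locfinR b] unfolding Pset_def by blast
    show "{r\<in>R. gfun B R b r = 0} \<subseteq> Pset B R b"
      using P_sup[OF disj locfinB locfinR b] by blast
  qed
  have P2: "Pset B R b1 = Pset B R b2 \<and> gfun B R b1 b2 = 1"
    if b: "b1 \<in> B" "b2 \<in> B" "b1 \<noteq> b2" "Pset B R b1 \<inter> Pset B R b2 \<noteq> {}" for b1 b2
  proof -
    obtain r where r: "r \<in> R" "gfun B R b1 r = 0" "gfun B R b2 r = 0" using b P1 by blast
    have "gfun B R b1 b2 = 1 \<and> (\<forall>r'\<in>R. gfun B R b1 r' = 0 \<longleftrightarrow> gfun B R b2 r' = 0)"
    proof (cases "b1 < b2")
      case True then show ?thesis using part2_aux[OF disj locfinB locfinR b(1,2) True r] by blast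
    next
      case False then have "b2 < b1" using b(3) by linarith
      then show ?thesis using part2_aux[OF disj locfinB locfinR b(2,1) _ r(1,3,2)] gfun_sym[of B R b1 b2] by metis
    qed
    then show ?thesis using P1 b by auto
  qed
  show ?thesis using P1 P2 by blast
qed

end
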